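(* Let $X_n\subset\mathbb{R}^2$ ($n\in\mathbb{N}$) be closed sets converging in the Painlevé–Kuratowski sense to a nonempty set $X\subset\mathbb{R}^2$. Then the Clarke subdifferentials $\partial\,\mathrm{dist}^2_{X_n}$ tend graphically to $\partial\,\mathrm{dist}^2_X$.
   Context: For a nonempty set $A\subset\mathbb{R}^p$, $\mathrm{dist}_A(a)=\inf\{|x-a|:x\in A\}$ (Euclidean norm) and $\mathrm{dist}^2_A=(\mathrm{dist}_A)^2$, a locally Lipschitz function. For a locally Lipschitz $g\colon\mathbb{R}^p\to\mathbb{R}$ the Clarke subdifferential is $\partial g(x):=\mathrm{conv}\{\lim_{\nu} g'(x_\nu)\mid x_\nu\notin Z,\ x_\nu\to x,\ (g'(x_\nu))_\nu\text{ convergent}\}$, $Z$ being a null set containing the non-differentiability points of $g$. For subsets $A_n$ of a metric space $M$, $\liminf A_n$ is the set of limits of sequences $x_n\in A_n$, $\limsup A_n$ is the set of limits of sequences $x_{n_k}\in A_{n_k}$ along some $n_1<n_2<\dots$, and $A_n\to A$ in the Painlevé–Kuratowski sense if both equal $A$. A sequence of multifunctions $F_n\colon\mathbb{R}^2\rightrightarrows Y$ tends graphically to $F$ if the graphs $\Gamma_{F_n}=\{(x,y):y\in F_n(x)\}$ converge to $\Gamma_F$ in the Painlevé–Kuratowski sense. *)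

theory Defs
  imports "HOL-Analysis.Analysis"
begin

text \<open>The exceptional null set Z
is taken to be exactly the set of points where g is not differentiable; the gradient
g'(y) at a differentiability point y is the vector v with derivative (\<lambda>h. v \<bullet> h).\<close>
definition clarke_subdiff :: "(real^2 \<Rightarrow> real) \<Rightarrow> real^2 \<Rightarrow> (real^2) set" where
  "clarke_subdiff g x = convex hull
     {v. \<exists>xs vs. (\<forall>\<nu>. (g has_derivative (\<lambda>h. vs \<nu> \<bullet> h)) (at (xs \<nu>)))
                 \<and> xs \<longlonglongrightarrow> x \<and> vs \<longlonglongrightarrow> v}"

definition PK_liminf :: "(nat \<Rightarrow> 'a::metric_space set) \<Rightarrow> 'a set" where
  "PK_liminf A = {x. \<exists>xs. (\<forall>n. xs n \<in> A n) \<and> xs \<longlonglongrightarrow> x}"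

definition PK_limsup :: "(nat \<Rightarrow> 'a::metric_space set) \<Rightarrow> 'a set" where
  "PK_limsup A = {x. \<exists>r xs. strict_mono r \<and> (\<forall>k. xs k \<in> A (r k)) \<and> xs \<longlonglongrightarrow> x}"

definition PK_converges :: "(nat \<Rightarrow> 'a::metric_space set) \<Rightarrow> 'a set \<Rightarrow> bool" where
  "PK_converges A L \<longleftrightarrow> PK_liminf A = L \<and> PK_limsup A = L"

definition graph_of :: "('a \<Rightarrow> 'b set) \<Rightarrow> ('a \<times> 'b) set" where
  "graph_of F = {(x, y). y \<in> F x}"

definition graph_converges ::
  "(nat \<Rightarrow> 'a::metric_space \<Rightarrow> 'b::metric_space set) \<Rightarrow> ('a \<Rightarrow> 'b set) \<Rightarrow> bool" where
  "graph_converges Fs F \<longleftrightarrow> PK_converges (\<lambda>n. graph_of (Fs n)) (graph_of F)"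

end

theory Submission
  imports Defs
begin


definition proj :: "(real^2) set \<Rightarrow> real^2 \<Rightarrow> (real^2) set" where
  "proj A x = {a\<in>A. dist x a = infdist x A}"

definition psi :: "(real^2) set \<Rightarrow> real^2 \<Rightarrow> real" where
  "psi A z = ((norm z)\<^sup>2 - (infdist z A)\<^sup>2) / 2"

lemma proj_ne:
  assumes "closed A" "A \<noteq> {}"
  shows "\<exists>a. a \<in> proj A x"
proof -
  obtain a where a: "a \<in> A" "\<And>y. y \<in> A \<Longrightarrow> dist x a \<le> dist x y"
    using distance_attains_inf[OF assms] by metis
  have "infdist x A \<le> dist x a" using a(1) by (rule infdist_le)
  moreover have "dist x a \<le> infdist x A"
    unfolding infdist_notempty[OF assms(2)] by (rule cINF_greatest) (use assms a in auto)
  ultimately show ?thesis using a unfolding proj_def by auto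
qed

lemma sq_infdist_le: "a \<in> A \<Longrightarrow> (infdist z A)\<^sup>2 \<le> (norm (z - a))\<^sup>2"
  by (metis dist_norm infdist_le infdist_nonneg power_mono)

lemma norm_diff_sq: "(norm (z - a))\<^sup>2 = (norm z)\<^sup>2 - 2 * (z \<bullet> a) + (norm a)\<^sup>2"
  for z a :: "real^2"
  by (simp add: power2_norm_eq_inner inner_diff_left inner_diff_right inner_commute)

lemma psi_lower: "a \<in> A \<Longrightarrow> psi A z \<ge> z \<bullet> a - (norm a)\<^sup>2 / 2"
proof -
  assume "a \<in> A"
  then have "(infdist z A)\<^sup>2 \<le> (norm (z - a))\<^sup>2" by (rule sq_infdist_le)
  then show ?thesis using norm_diff_sq[of z a] unfolding psi_def by (simp add: field_simps)
qed

lemma psi_proj: "a \<in> proj A x \<Longrightarrow> psi A x = x \<bullet> a - (norm a)\<^sup>2 / 2"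
  using norm_diff_sq[of x a] unfolding psi_def proj_def by (auto simp: dist_norm)

lemma psi_convex:
  assumes "closed A" "A \<noteq> {}" "0 \<le> t" "t \<le> 1"
  shows "psi A ((1 - t) *\<^sub>R u + t *\<^sub>R v) \<le> (1 - t) * psi A u + t * psi A v"
proof -
  let ?w = "(1 - t) *\<^sub>R u + t *\<^sub>R v"
  obtain a where a: "a \<in> proj A ?w" using proj_ne[OF assms(1,2)] by blast
  have aA: "a \<in> A" using a unfolding proj_def by auto
  have "psi A ?w = (1 - t) * (u \<bullet> a - (norm a)\<^sup>2 / 2) + t * (v \<bullet> a - (norm a)\<^sup>2 / 2)"
    using psi_proj[OF a] by (simp add: inner_add_left algebra_simps diff_divide_distrib)
  also have "\<dots> \<le> (1 - t) * psi A u + t * psi A v"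
    using psi_lower[OF aA, of u] psi_lower[OF aA, of v] assms(3,4)
    by (intro add_mono mult_left_mono) auto
  finally show ?thesis .
qed

lemma subgrad_hull:
  assumes "c \<in> convex hull (proj A x)"
  shows "psi A z - psi A x \<ge> c \<bullet> (z - x)"
proof -
  have "convex hull (proj A x) \<subseteq> {c. psi A z - psi A x \<ge> c \<bullet> (z - x)}"
  proof (rule hull_minimal)
    show "proj A x \<subseteq> {c. psi A z - psi A x \<ge> c \<bullet> (z - x)}"
    proof
      fix a assume a: "a \<in> proj A x"
      then have "a \<in> A" unfolding proj_def by auto
      then show "a \<in> {c. psi A z - psi A x \<ge> c \<bullet> (z - x)}"
        using psi_lower[of a A z] psi_proj[OF a] by (simp add: inner_diff_right inner_commute)
    qed
    show "convex {c. psi A z - psi A x \<ge> c \<bullet> (z - x)}"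
      unfolding convex_def
    proof (intro ballI allI impI, simp)
      fix c1 c2 :: "real^2" and u v :: real
      assume h: "c1 \<bullet> (z - x) \<le> psi A z - psi A x" "c2 \<bullet> (z - x) \<le> psi A z - psi A x"
        "0 \<le> u" "0 \<le> v" "u + v = 1"
      have "(u *\<^sub>R c1 + v *\<^sub>R c2) \<bullet> (z - x) = u * (c1 \<bullet> (z - x)) + v * (c2 \<bullet> (z - x))"
        by (simp add: inner_add_left)
      also have "\<dots> \<le> u * (psi A z - psi A x) + v * (psi A z - psi A x)"
        using h by (intro add_mono mult_left_mono) auto
      also have "\<dots> = (u + v) * (psi A z - psi A x)" by (simp add: algebra_simps)
      also have "\<dots> = psi A z - psi A x" using h(5) by simp
      finally show "(u *\<^sub>R c1 + v *\<^sub>R c2) \<bullet> (z - x) \<le> psi A z - psi A x" .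
    qed
  qed
  then show ?thesis using assms by auto
qed

lemma proj_sub: "proj A x \<subseteq> A" unfolding proj_def by auto

lemma proj_compact: "closed A \<Longrightarrow> compact (proj A x)"
proof -
  assume "closed A"
  have "proj A x = A \<inter> sphere x (infdist x A)" unfolding proj_def sphere_def by auto
  then show ?thesis using closed_Int_compact[OF \<open>closed A\<close> compact_sphere] by simp
qed

lemma subgrad_hull_rev:
  assumes A: "closed A" "A \<noteq> {}"
    and sg: "\<And>z. psi A z - psi A x \<ge> c \<bullet> (z - x)"
  shows "c \<in> convex hull (proj A x)"
proof (rule ccontr)
  let ?K = "convex hull (proj A x)"
  assume nc: "c \<notin> ?K"
  have "compact ?K" using proj_compact[OF A(1)] by (rule compact_convex_hull)
  then have "closed ?K" by (rule compact_imp_closed)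
  from separating_hyperplane_closed_point[OF convex_convex_hull this nc]
  obtain e b where eb: "e \<bullet> c < b" "\<And>y. y \<in> ?K \<Longrightarrow> e \<bullet> y > b"
    by auto
  define f where "f = - e"
  define t where "t k = inverse (real (Suc k))" for k
  define y where "y k = x + t k *\<^sub>R f" for k
  have tpos: "t k > 0" "t k \<le> 1" for k unfolding t_def by (auto simp: field_simps)
  define a where "a k = (SOME p. p \<in> proj A (y k))" for k
  have a: "a k \<in> proj A (y k)" for k unfolding a_def using proj_ne[OF A] by (rule someI_ex)
  have aA: "a k \<in> A" for k using a proj_sub by blast
  have ineq: "e \<bullet> a k \<le> e \<bullet> c" for k
  proof -
    have "t k * (f \<bullet> a k) = psi A (y k) - (x \<bullet> a k - (norm (a k))\<^sup>2 / 2)"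
      using psi_proj[OF a[of k]] unfolding y_def by (simp add: inner_add_left)
    also have "\<dots> \<ge> psi A (y k) - psi A x" using psi_lower[OF aA[of k], of x] by simp
    also have "psi A (y k) - psi A x \<ge> c \<bullet> (y k - x)" by (rule sg)
    also have "c \<bullet> (y k - x) = t k * (c \<bullet> f)" unfolding y_def by simp
    finally have "t k * (c \<bullet> f) \<le> t k * (f \<bullet> a k)" .
    then have "c \<bullet> f \<le> f \<bullet> a k" using tpos[of k] by simp
    then show ?thesis unfolding f_def by (simp add: inner_commute)
  qed
  have bnd: "a k \<in> cball x (infdist x A + 2 * norm f)" for k
  proof -
    have "dist x (y k) = t k * norm f" unfolding y_def using tpos[of k] by (simp add: dist_norm)
    also have "\<dots> \<le> norm f" using tpos[of k] by (simp add: mult_left_le_one_le)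
    finally have d1: "dist x (y k) \<le> norm f" .
    have "dist (y k) (a k) = infdist (y k) A" using a[of k] unfolding proj_def by auto
    also have "\<dots> \<le> infdist x A + dist (y k) x" by (rule infdist_triangle)
    finally have "dist (y k) (a k) \<le> infdist x A + norm f" using d1 by (simp add: dist_commute)
    then have "dist x (a k) \<le> infdist x A + 2 * norm f"
      using dist_triangle[of x "a k" "y k"] d1 by linarith
    then show ?thesis by simp
  qed
  obtain l r where lr: "l \<in> cball x (infdist x A + 2 * norm f)" "strict_mono r" "(a \<circ> r) \<longlonglongrightarrow> l"
    by (rule seq_compactE[OF compact_imp_seq_compact[OF compact_cball], of a]) (use bnd in blast)+
  have "l \<in> A" by (rule closed_sequentially[OF A(1) _ lr(3)]) (simp add: aA)
  have "t \<longlonglongrightarrow> 0" unfolding t_def by (rule LIMSEQ_inverse_real_of_nat)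
  then have "(\<lambda>k. x + t k *\<^sub>R f) \<longlonglongrightarrow> x + 0 *\<^sub>R f" by (intro tendsto_intros)
  then have "y \<longlonglongrightarrow> x" unfolding y_def by simp
  then have yr: "(y \<circ> r) \<longlonglongrightarrow> x" using LIMSEQ_subseq_LIMSEQ lr(2) by blast
  have e1: "(\<lambda>k. dist (y (r k)) (a (r k))) \<longlonglongrightarrow> dist x l"
    using tendsto_dist[OF yr lr(3)] by (simp add: o_def)
  have e2: "(\<lambda>k. dist (y (r k)) (a (r k))) \<longlonglongrightarrow> infdist x A"
  proof -
    have "(\<lambda>k. infdist (y (r k)) A) \<longlonglongrightarrow> infdist x A"
      using tendsto_infdist[OF yr] by (simp add: o_def)
    moreover have "dist (y (r k)) (a (r k)) = infdist (y (r k)) A" for k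
      using a[of "r k"] unfolding proj_def by auto
    ultimately show ?thesis by simp
  qed
  have "dist x l = infdist x A" using LIMSEQ_unique[OF e1 e2] .
  then have "l \<in> proj A x" using \<open>l \<in> A\<close> unfolding proj_def by auto
  then have "e \<bullet> l > b" by (intro eb(2) hull_inc)
  moreover have "e \<bullet> l \<le> e \<bullet> c"
  proof (rule tendsto_le[OF trivial_limit_sequentially tendsto_const])
    show "((\<lambda>k. e \<bullet> (a \<circ> r) k) \<longlonglongrightarrow> e \<bullet> l)"
      by (intro tendsto_intros lr(3))
    show "\<forall>\<^sub>F k in sequentially. e \<bullet> (a \<circ> r) k \<le> e \<bullet> c" using ineq by simp
  qed
  ultimately show False using eb(1) by linarith
qed



lemma quad_deriv:
  fixes f :: "real^2 \<Rightarrow> real"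
  assumes L: "bounded_linear L" and b: "\<And>h. \<bar>f (y + h) - f y - L h\<bar> \<le> K * (norm h)\<^sup>2"
  shows "(f has_derivative L) (at y)"
  unfolding has_derivative_iff_norm
proof (intro conjI L)
  show "((\<lambda>z. norm (f z - f y - L (z - y)) / norm (z - y)) \<longlongrightarrow> 0) (at y)"
  proof (rule Lim_null_comparison)
    show "\<forall>\<^sub>F z in at y. norm (norm (f z - f y - L (z - y)) / norm (z - y)) \<le> K * norm (z - y)"
    proof (rule always_eventually, rule allI)
      fix z
      have bz: "\<bar>f z - f y - L (z - y)\<bar> \<le> K * (norm (z - y))\<^sup>2" using b[of "z - y"] by simp
      show "norm (norm (f z - f y - L (z - y)) / norm (z - y)) \<le> K * norm (z - y)"
      proof (cases "z = y")
        case True then show ?thesis by simp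
      next
        case False
        then have np: "norm (z - y) > 0" by simp
        have "\<bar>f z - f y - L (z - y)\<bar> / norm (z - y) \<le> K * (norm (z - y))\<^sup>2 / norm (z - y)"
          using bz np by (intro divide_right_mono) auto
        also have "\<dots> = K * norm (z - y)" using np by (simp add: power2_eq_square)
        finally show ?thesis by simp
      qed
    qed
    have "((\<lambda>z. K * norm (z - y)) \<longlongrightarrow> K * norm (y - y)) (at y)" by (intro tendsto_intros)
    then show "((\<lambda>z. K * norm (z - y)) \<longlongrightarrow> 0) (at y)" by simp
  qed
qed

lemma key_ineq:
  fixes x a b :: "real^2"
  assumes "norm (x - a) \<le> norm (x - b)" "0 \<le> t" "t \<le> 1"
  shows "(norm (x + t *\<^sub>R (a - x) - b))\<^sup>2 \<ge> (norm (x + t *\<^sub>R (a - x) - a))\<^sup>2 + t * (norm (a - b))\<^sup>2"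
proof -
  define u where "u = x - b"
  define w where "w = a - b"
  have e1: "x + t *\<^sub>R (a - x) - b = (1 - t) *\<^sub>R u + t *\<^sub>R w" unfolding u_def w_def by (simp add: algebra_simps)
  have e2: "x + t *\<^sub>R (a - x) - a = (1 - t) *\<^sub>R (u - w)" unfolding u_def w_def by (simp add: algebra_simps)
  have e3: "x - a = u - w" "a - b = w" unfolding u_def w_def by simp_all
  have n1: "(norm ((1 - t) *\<^sub>R u + t *\<^sub>R w))\<^sup>2 = (1-t)^2 * (u \<bullet> u) + 2 * t * (1 - t) * (u \<bullet> w) + t^2 * (w \<bullet> w)"
    unfolding power2_norm_eq_inner by (simp add: inner_add_left inner_add_right inner_commute power2_eq_square algebra_simps)
  have n2: "(norm ((1 - t) *\<^sub>R (u - w)))\<^sup>2 = (1-t)^2 * ((u \<bullet> u) - 2 * (u \<bullet> w) + (w \<bullet> w))"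
    unfolding power2_norm_eq_inner by (simp add: inner_diff_left inner_diff_right inner_commute power2_eq_square algebra_simps)
  have "(norm (u - w))\<^sup>2 \<le> (norm u)\<^sup>2" using assms(1) e3 u_def by (simp add: power_mono)
  then have q: "(u \<bullet> u) - 2 * (u \<bullet> w) + (w \<bullet> w) \<le> u \<bullet> u"
    by (simp add: power2_norm_eq_inner inner_diff_left inner_diff_right inner_commute)
  have n3: "(norm (a - b))\<^sup>2 = w \<bullet> w" using e3 by (simp add: power2_norm_eq_inner)
  have "(1 - t) * (2 * (u \<bullet> w) - (w \<bullet> w)) \<ge> 0" using q assms(3) by simp
  then show ?thesis unfolding e1 e2 n1 n2 n3 by (simp add: power2_eq_square algebra_simps)
qed



lemma nsq: "(norm (p + h))\<^sup>2 = (norm p)\<^sup>2 + 2 * (p \<bullet> h) + (norm h)\<^sup>2" for p h :: "real^2"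
  unfolding power2_norm_eq_inner by (simp add: inner_add_left inner_add_right inner_commute)

lemma deriv_seg:
  assumes A: "closed A" "A \<noteq> {}" and a: "a \<in> proj A x" and t: "0 < t" "t \<le> 1"
  shows "((\<lambda>z. (infdist z A)\<^sup>2) has_derivative (\<lambda>h. (2 *\<^sub>R (x + t *\<^sub>R (a - x) - a)) \<bullet> h))
           (at (x + t *\<^sub>R (a - x)))"
proof -
  define y where "y = x + t *\<^sub>R (a - x)"
  have aA: "a \<in> A" and ha: "infdist x A = dist x a" using a unfolding proj_def by auto
  have kb: "(norm (y - b))\<^sup>2 \<ge> (norm (y - a))\<^sup>2 + t * (norm (a - b))\<^sup>2" if "b \<in> A" for b
  proof -
    have "norm (x - a) \<le> norm (x - b)" using infdist_le[OF that, of x] ha by (simp add: dist_norm)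
    from key_ineq[OF this] t show ?thesis unfolding y_def by simp
  qed
  have fy: "(infdist y A)\<^sup>2 = (norm (y - a))\<^sup>2"
  proof -
    obtain b where b: "b \<in> proj A y" using proj_ne[OF A] by blast
    have bA: "b \<in> A" and hb: "infdist y A = norm (y - b)" using b unfolding proj_def by (auto simp: dist_norm)
    have "(norm (y - a))\<^sup>2 \<le> (norm (y - b))\<^sup>2" using kb[OF bA] t by (smt (verit) mult_nonneg_nonneg zero_le_power2)
    moreover have "(infdist y A)\<^sup>2 \<le> (norm (y - a))\<^sup>2" by (rule sq_infdist_le[OF aA])
    ultimately show ?thesis using hb by simp
  qed
  have "((\<lambda>z. (infdist z A)\<^sup>2) has_derivative (\<lambda>h. (2 *\<^sub>R (y - a)) \<bullet> h)) (at y)"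
  proof (rule quad_deriv[where K = "1 / t"])
    show "bounded_linear (\<lambda>h. (2 *\<^sub>R (y - a)) \<bullet> h)" by (rule bounded_linear_inner_right)
    fix h :: "real^2"
    have up: "(infdist (y + h) A)\<^sup>2 \<le> (norm (y - a))\<^sup>2 + 2 * ((y - a) \<bullet> h) + (norm h)\<^sup>2"
      using sq_infdist_le[OF aA, of "y + h"] nsq[of "y - a" h] by (simp add: algebra_simps)
    obtain b where b: "b \<in> proj A (y + h)" using proj_ne[OF A] by blast
    have bA: "b \<in> A" and hb: "infdist (y + h) A = norm (y + h - b)" using b unfolding proj_def by (auto simp: dist_norm)
    define s where "s = norm (a - b)"
    define m where "m = norm h"
    have cs: "(a - b) \<bullet> h \<ge> - (s * m)"
    proof -
      have "(b - a) \<bullet> h = - ((a - b) \<bullet> h)" by (simp add: inner_diff_left)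
      moreover have "norm (b - a) = norm (a - b)" by (rule norm_minus_commute)
      ultimately have "- ((a - b) \<bullet> h) \<le> norm (a - b) * norm h" using norm_cauchy_schwarz[of "b - a" h] by simp
      then show ?thesis unfolding s_def m_def by linarith
    qed
    have sq: "t * s\<^sup>2 - 2 * (s * m) \<ge> - (m\<^sup>2 / t)"
    proof -
      have "t * s\<^sup>2 - 2 * (s * m) + m\<^sup>2 / t = (t * s - m)\<^sup>2 / t" using t by (simp add: field_simps power2_eq_square)
      also have "\<dots> \<ge> 0" using t by simp
      finally show ?thesis by linarith
    qed
    have "(infdist (y + h) A)\<^sup>2 = (norm ((y - b) + h))\<^sup>2" using hb by (simp add: algebra_simps)
    also have "\<dots> = (norm (y - b))\<^sup>2 + 2 * ((y - b) \<bullet> h) + m\<^sup>2" unfolding m_def by (rule nsq)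
    also have "(y - b) \<bullet> h = (y - a) \<bullet> h + (a - b) \<bullet> h" by (simp add: inner_diff_left)
    finally have e: "(infdist (y + h) A)\<^sup>2 = (norm (y - b))\<^sup>2 + 2 * ((y - a) \<bullet> h) + 2 * ((a - b) \<bullet> h) + m\<^sup>2"
      by simp
    have k: "(norm (y - a))\<^sup>2 + t * s\<^sup>2 \<le> (norm (y - b))\<^sup>2" using kb[OF bA] unfolding s_def .
    have lo: "(infdist (y + h) A)\<^sup>2 \<ge> (norm (y - a))\<^sup>2 + 2 * ((y - a) \<bullet> h) + m\<^sup>2 - m\<^sup>2 / t"
      using e k cs sq by linarith
    have "m\<^sup>2 \<le> m\<^sup>2 / t" using t by (simp add: field_simps mult_left_le_one_le)
    then show "\<bar>(infdist (y + h) A)\<^sup>2 - (infdist y A)\<^sup>2 - (2 *\<^sub>R (y - a)) \<bullet> h\<bar> \<le> 1 / t * (norm h)\<^sup>2"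
    proof -
      have i: "(2 *\<^sub>R (y - a)) \<bullet> h = 2 * ((y - a) \<bullet> h)" by simp
      have "1 / t * (norm h)\<^sup>2 = m\<^sup>2 / t" unfolding m_def by simp
      then show ?thesis unfolding abs_le_iff i using up lo fy zero_le_power2[of m] \<open>m\<^sup>2 \<le> m\<^sup>2 / t\<close>
        unfolding m_def by linarith
    qed
  qed
  then show ?thesis unfolding y_def .
qed

lemma grad_proj:
  assumes d: "((\<lambda>z. (infdist z A)\<^sup>2) has_derivative (\<lambda>h. v \<bullet> h)) (at y)" and a: "a \<in> proj A y"
  shows "v = 2 *\<^sub>R (y - a)"
proof -
  have aA: "a \<in> A" and ha: "infdist y A = norm (y - a)" using a unfolding proj_def by (auto simp: dist_norm)
  have d2: "((\<lambda>z. (z - a) \<bullet> (z - a)) has_derivative (\<lambda>h. h \<bullet> (y - a) + (y - a) \<bullet> h)) (at y)"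
    by (auto intro!: derivative_eq_intros)
  have dg: "((\<lambda>z. (z - a) \<bullet> (z - a) - (infdist z A)\<^sup>2) has_derivative
             (\<lambda>h. (h \<bullet> (y - a) + (y - a) \<bullet> h) - v \<bullet> h)) (at y)"
    by (rule has_derivative_diff[OF d2 d])
  have "(\<lambda>h. (h \<bullet> (y - a) + (y - a) \<bullet> h) - v \<bullet> h) = (\<lambda>h. 0)"
  proof (rule has_derivative_local_min[OF dg], rule always_eventually, rule allI)
    fix z
    have "(infdist z A)\<^sup>2 \<le> (z - a) \<bullet> (z - a)" using sq_infdist_le[OF aA, of z] by (simp add: power2_norm_eq_inner)
    moreover have "(y - a) \<bullet> (y - a) - (infdist y A)\<^sup>2 = 0" using ha by (simp add: power2_norm_eq_inner)
    ultimately show "(y - a) \<bullet> (y - a) - (infdist y A)\<^sup>2 \<le> (z - a) \<bullet> (z - a) - (infdist z A)\<^sup>2" by simp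
  qed
  define u where "u = 2 *\<^sub>R (y - a) - v"
  have z: "u \<bullet> (y - a) + (y - a) \<bullet> u - v \<bullet> u = 0" using fun_cong[OF \<open>_ = (\<lambda>h. 0)\<close>, of u] by simp
  have "u \<bullet> u = u \<bullet> (y - a) + (y - a) \<bullet> u - v \<bullet> u"
    unfolding u_def by (simp add: inner_diff_left inner_diff_right inner_commute algebra_simps)
  then have "u = 0" using z by simp
  then show ?thesis unfolding u_def by simp
qed



lemma hull_affine_img:
  "convex hull ((\<lambda>a. 2 *\<^sub>R (x - a)) ` S) = (\<lambda>a. 2 *\<^sub>R (x - a)) ` (convex hull S)"
  for x :: "real^2"
proof -
  have e: "(\<lambda>a. 2 *\<^sub>R (x - a)) ` T = (\<lambda>z. 2 *\<^sub>R x + z) ` ((\<lambda>a. (-2) *\<^sub>R a) ` T)" for T :: "(real^2) set"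
    by (simp add: image_image scaleR_diff_right)
  have l: "linear (\<lambda>a::real^2. (-2) *\<^sub>R a)" by (rule linear_scaleR)
  show ?thesis unfolding e convex_hull_translation convex_hull_linear_image[OF l] ..
qed

lemma clarke_char:
  assumes A: "closed A" "A \<noteq> {}"
  shows "clarke_subdiff (\<lambda>a. (infdist a A)\<^sup>2) x = (\<lambda>c. 2 *\<^sub>R (x - c)) ` (convex hull (proj A x))"
proof -
  let ?R = "{v. \<exists>xs vs. (\<forall>\<nu>. ((\<lambda>a. (infdist a A)\<^sup>2) has_derivative (\<lambda>h. vs \<nu> \<bullet> h)) (at (xs \<nu>)))
                 \<and> xs \<longlonglongrightarrow> x \<and> vs \<longlonglongrightarrow> v}"
  let ?G = "(\<lambda>a. 2 *\<^sub>R (x - a)) ` proj A x"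
  have "?R \<subseteq> ?G"
  proof
    fix v assume "v \<in> ?R"
    then obtain xs vs where d: "\<And>\<nu>. ((\<lambda>a. (infdist a A)\<^sup>2) has_derivative (\<lambda>h. vs \<nu> \<bullet> h)) (at (xs \<nu>))"
      and xs: "xs \<longlonglongrightarrow> x" and vs: "vs \<longlonglongrightarrow> v" by blast
    define a where "a k = (SOME p. p \<in> proj A (xs k))" for k
    have a: "a k \<in> proj A (xs k)" for k unfolding a_def using proj_ne[OF A] by (rule someI_ex)
    have vk: "vs k = 2 *\<^sub>R (xs k - a k)" for k by (rule grad_proj[OF d a])
    have ak: "a k = xs k - (1/2) *\<^sub>R vs k" for k using vk[of k] by simp
    have al: "a \<longlonglongrightarrow> x - (1/2) *\<^sub>R v" unfolding ak by (intro tendsto_intros xs vs)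
    define b where "b = x - (1/2) *\<^sub>R v"
    have "b \<in> A" unfolding b_def by (rule closed_sequentially[OF A(1) _ al]) (use a proj_sub in blast)
    have e1: "(\<lambda>k. dist (xs k) (a k)) \<longlonglongrightarrow> dist x b" unfolding b_def by (intro tendsto_intros xs al)
    have "(\<lambda>k. infdist (xs k) A) \<longlonglongrightarrow> infdist x A" by (intro tendsto_intros xs)
    moreover have "dist (xs k) (a k) = infdist (xs k) A" for k using a[of k] unfolding proj_def by auto
    ultimately have e2: "(\<lambda>k. dist (xs k) (a k)) \<longlonglongrightarrow> infdist x A" by simp
    have "dist x b = infdist x A" using LIMSEQ_unique[OF e1 e2] .
    then have "b \<in> proj A x" using \<open>b \<in> A\<close> unfolding proj_def by auto
    moreover have "v = 2 *\<^sub>R (x - b)" unfolding b_def by simp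
    ultimately show "v \<in> ?G" by blast
  qed
  moreover have "?G \<subseteq> ?R"
  proof
    fix v assume "v \<in> ?G"
    then obtain a where a: "a \<in> proj A x" and v: "v = 2 *\<^sub>R (x - a)" by blast
    define t where "t k = inverse (real (Suc k))" for k
    have tpos: "t k > 0" "t k \<le> 1" for k unfolding t_def by (auto simp: field_simps)
    define xs where "xs k = x + t k *\<^sub>R (a - x)" for k
    define vs where "vs k = 2 *\<^sub>R (xs k - a)" for k
    have d: "((\<lambda>a. (infdist a A)\<^sup>2) has_derivative (\<lambda>h. vs k \<bullet> h)) (at (xs k))" for k
      unfolding vs_def xs_def by (rule deriv_seg[OF A a tpos])
    have "t \<longlonglongrightarrow> 0" unfolding t_def by (rule LIMSEQ_inverse_real_of_nat)
    then have "(\<lambda>k. x + t k *\<^sub>R (a - x)) \<longlonglongrightarrow> x + 0 *\<^sub>R (a - x)" by (intro tendsto_intros)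
    then have xl: "xs \<longlonglongrightarrow> x" unfolding xs_def by simp
    have "vs \<longlonglongrightarrow> 2 *\<^sub>R (x - a)" unfolding vs_def by (intro tendsto_intros xl)
    then show "v \<in> ?R" using d xl v by blast
  qed
  ultimately have "?R = ?G" by blast
  then show ?thesis unfolding clarke_subdiff_def using hull_affine_img by simp
qed



lemma PK_ne:
  assumes "X \<noteq> {}" "PK_converges Xs X"
  shows "Xs n \<noteq> {}"
proof -
  obtain x where "x \<in> X" using assms(1) by blast
  then have "x \<in> PK_liminf Xs" using assms(2) unfolding PK_converges_def by simp
  then show ?thesis unfolding PK_liminf_def by blast
qed

lemma PK_upper:
  assumes "PK_converges Xs X" "a \<in> X" "e > 0"
  shows "\<exists>N. \<forall>n\<ge>N. infdist z (Xs n) < dist z a + e"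
proof -
  have "a \<in> PK_liminf Xs" using assms unfolding PK_converges_def by simp
  then obtain q where q: "\<And>n. q n \<in> Xs n" "q \<longlonglongrightarrow> a" unfolding PK_liminf_def by blast
  then obtain N where N: "\<And>n. n \<ge> N \<Longrightarrow> dist (q n) a < e" using assms(3) unfolding lim_sequentially by blast
  have "infdist z (Xs n) < dist z a + e" if "n \<ge> N" for n
  proof -
    have "infdist z (Xs n) \<le> dist z (q n)" by (rule infdist_le[OF q(1)])
    also have "\<dots> \<le> dist z a + dist (q n) a" by (rule dist_triangle2)
    finally show ?thesis using N[OF that] by linarith
  qed
  then show ?thesis by blast
qed

lemma PK_closed:
  fixes Xs :: "nat \<Rightarrow> (real^2) set"
  assumes cl: "\<forall>n. closed (Xs n)" and ne: "X \<noteq> {}" and pk: "PK_converges Xs X"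
  shows "closed X"
  unfolding closed_sequential_limits
proof (intro allI impI, elim conjE)
  fix p l assume p: "\<forall>n. p n \<in> X" and pl: "p \<longlonglongrightarrow> l"
  define s where "s n = (SOME b. b \<in> proj (Xs n) l)" for n
  have s: "s n \<in> proj (Xs n) l" for n unfolding s_def
    using proj_ne[OF cl[rule_format] PK_ne[OF ne pk]] by (rule someI_ex)
  have "s \<longlonglongrightarrow> l" unfolding lim_sequentially
  proof (intro allI impI)
    fix e :: real assume e: "e > 0"
    obtain k where k: "dist (p k) l < e / 2" using pl e unfolding lim_sequentially
      by (metis half_gt_zero order_refl)
    obtain N where N: "\<And>n. n \<ge> N \<Longrightarrow> infdist l (Xs n) < dist l (p k) + e / 2"
      using PK_upper[OF pk p[rule_format] half_gt_zero[OF e]] by blast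
    have "dist (s n) l < e" if "n \<ge> N" for n
    proof -
      have "dist (s n) l = infdist l (Xs n)" using s[of n] unfolding proj_def by (auto simp: dist_commute)
      then show ?thesis using N[OF that] k by (simp add: dist_commute)
    qed
    then show "\<exists>N. \<forall>n\<ge>N. dist (s n) l < e" by blast
  qed
  moreover have "\<forall>n. s n \<in> Xs n" using s proj_sub by blast
  ultimately have "l \<in> PK_liminf Xs" unfolding PK_liminf_def by blast
  then show "l \<in> X" using pk unfolding PK_converges_def by simp
qed

lemma PK_pointwise:
  fixes Xs :: "nat \<Rightarrow> (real^2) set"
  assumes cl: "\<forall>n. closed (Xs n)" and ne: "X \<noteq> {}" and pk: "PK_converges Xs X"
  shows "(\<lambda>n. infdist z (Xs n)) \<longlonglongrightarrow> infdist z X"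
  unfolding lim_sequentially
proof (intro allI impI)
  fix e :: real assume e: "e > 0"
  have clX: "closed X" by (rule PK_closed[OF cl ne pk])
  obtain a where a: "a \<in> proj X z" using proj_ne[OF clX ne] by blast
  have aX: "a \<in> X" and da: "dist z a = infdist z X" using a unfolding proj_def by auto
  have "\<exists>N. \<forall>n\<ge>N. infdist z (Xs n) < dist z a + e" by (rule PK_upper[OF pk aX e])
  then have "\<exists>N. \<forall>n\<ge>N. infdist z (Xs n) < infdist z X + e" by (simp only: da)
  then obtain N1 where N1: "\<And>n. n \<ge> N1 \<Longrightarrow> infdist z (Xs n) < infdist z X + e"
    by blast
  have "\<exists>N2. \<forall>n\<ge>N2. infdist z (Xs n) > infdist z X - e"
  proof (rule ccontr)
    assume "\<not> ?thesis"
    then have "\<forall>N. \<exists>n\<ge>N. n \<in> {n. infdist z (Xs n) \<le> infdist z X - e}" by (auto simp: not_less)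
    then have "infinite {n. infdist z (Xs n) \<le> infdist z X - e}" unfolding infinite_nat_iff_unbounded_le .
    then obtain r :: "nat \<Rightarrow> nat" where r: "strict_mono r" "\<And>k. infdist z (Xs (r k)) \<le> infdist z X - e"
      using infinite_enumerate by blast
    define b where "b k = (SOME q. q \<in> proj (Xs (r k)) z)" for k
    have b: "b k \<in> proj (Xs (r k)) z" for k unfolding b_def
      using proj_ne[OF cl[rule_format] PK_ne[OF ne pk]] by (rule someI_ex)
    have bc: "b k \<in> cball z (infdist z X - e)" for k using b[of k] r(2)[of k] unfolding proj_def by auto
    obtain l s where ls: "l \<in> cball z (infdist z X - e)" "strict_mono s" "(b \<circ> s) \<longlonglongrightarrow> l"
      by (rule seq_compactE[OF compact_imp_seq_compact[OF compact_cball], of b]) (use bc in blast)+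
    have "l \<in> PK_limsup Xs" unfolding PK_limsup_def
    proof (intro CollectI exI conjI allI)
      show "strict_mono (r \<circ> s)" by (rule strict_mono_o[OF r(1) ls(2)])
      show "(b \<circ> s) k \<in> Xs ((r \<circ> s) k)" for k using b[of "s k"] proj_sub by auto
      show "(b \<circ> s) \<longlonglongrightarrow> l" by (rule ls(3))
    qed
    then have "l \<in> X" using pk unfolding PK_converges_def by simp
    then have "infdist z X \<le> dist z l" by (rule infdist_le)
    then show False using ls(1) e by simp
  qed
  then obtain N2 where N2: "\<And>n. n \<ge> N2 \<Longrightarrow> infdist z (Xs n) > infdist z X - e" by blast
  have "dist (infdist z (Xs n)) (infdist z X) < e" if "n \<ge> max N1 N2" for n
    using N1[of n] N2[of n] that by (simp add: dist_real_def abs_less_iff)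
  then show "\<exists>N. \<forall>n\<ge>N. dist (infdist z (Xs n)) (infdist z X) < e" by blast
qed

lemma PK_joint:
  fixes Xs :: "nat \<Rightarrow> (real^2) set"
  assumes cl: "\<forall>n. closed (Xs n)" and ne: "X \<noteq> {}" and pk: "PK_converges Xs X"
    and r: "strict_mono r" and z: "zs \<longlonglongrightarrow> z"
  shows "(\<lambda>k. infdist (zs k) (Xs (r k))) \<longlonglongrightarrow> infdist z X"
proof -
  have f: "(\<lambda>k. infdist z (Xs (r k))) \<longlonglongrightarrow> infdist z X"
    using LIMSEQ_subseq_LIMSEQ[OF PK_pointwise[OF cl ne pk] r] by (simp add: o_def)
  have "(\<lambda>k. infdist (zs k) (Xs (r k)) - infdist z (Xs (r k))) \<longlonglongrightarrow> 0"
  proof (rule Lim_null_comparison)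
    show "\<forall>\<^sub>F k in sequentially. norm (infdist (zs k) (Xs (r k)) - infdist z (Xs (r k))) \<le> dist (zs k) z"
    proof (intro always_eventually allI)
      fix k show "norm (infdist (zs k) (Xs (r k)) - infdist z (Xs (r k))) \<le> dist (zs k) z"
        unfolding real_norm_def by (rule infdist_triangle_abs)
    qed
    show "(\<lambda>k. dist (zs k) z) \<longlonglongrightarrow> 0" using z tendsto_dist_iff by blast
  qed
  from tendsto_add[OF this f] show ?thesis by simp
qed

lemma PK_joint_psi:
  fixes Xs :: "nat \<Rightarrow> (real^2) set"
  assumes cl: "\<forall>n. closed (Xs n)" and ne: "X \<noteq> {}" and pk: "PK_converges Xs X"
    and r: "strict_mono r" and z: "zs \<longlonglongrightarrow> z"
  shows "(\<lambda>k. psi (Xs (r k)) (zs k)) \<longlonglongrightarrow> psi X z"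
  unfolding psi_def by (intro tendsto_intros PK_joint[OF cl ne pk r z] z) simp



lemma coercive_min:
  fixes f :: "real^2 \<Rightarrow> real"
  assumes cont: "continuous_on UNIV f"
    and lb: "\<And>y. f y \<ge> (norm (y - p))\<^sup>2 / 2 - B * norm (y - p) - C"
  shows "\<exists>m. \<forall>y. f m \<le> f y"
proof -
  define R where "R = 2 * \<bar>B\<bar> + 2 * \<bar>C\<bar> + 2 * \<bar>f p\<bar> + 2"
  have R: "R \<ge> 2" unfolding R_def by simp
  have "\<exists>x\<in>cball p R. \<forall>y\<in>cball p R. f x \<le> f y"
    by (rule continuous_attains_inf[OF compact_cball]) (use R continuous_on_subset[OF cont] in auto)
  then obtain m where m: "m \<in> cball p R" "\<And>y. y \<in> cball p R \<Longrightarrow> f m \<le> f y" by blast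
  have pin: "p \<in> cball p R" using R by simp
  have "f m \<le> f y" for y
  proof (cases "y \<in> cball p R")
    case True then show ?thesis by (rule m(2))
  next
    case False
    define \<rho> where "\<rho> = norm (y - p)"
    have rho: "\<rho> > R" using False unfolding \<rho>_def by (simp add: dist_norm norm_minus_commute)
    define q where "q = \<rho> / 2 - \<bar>B\<bar>"
    have q: "q \<ge> \<bar>C\<bar> + \<bar>f p\<bar> + 1" using rho unfolding q_def R_def by simp
    have "\<rho> * q \<ge> 1 * q" using rho R q by (intro mult_right_mono) auto
    moreover have "B * \<rho> \<le> \<bar>B\<bar> * \<rho>" using rho R by (intro mult_right_mono) auto
    moreover have "\<rho>\<^sup>2 / 2 - \<bar>B\<bar> * \<rho> = \<rho> * q" unfolding q_def by (simp add: power2_eq_square algebra_simps)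
    moreover have "f y \<ge> \<rho>\<^sup>2 / 2 - B * \<rho> - C" using lb[of y] unfolding \<rho>_def .
    ultimately have "f y > \<bar>f p\<bar>" using q by linarith
    moreover have "f m \<le> f p" by (rule m(2)[OF pin])
    ultimately show ?thesis by linarith
  qed
  then show ?thesis by blast
qed

lemma opt_cond:
  assumes A: "closed A" "A \<noteq> {}"
    and min: "\<And>y. psi A m - c \<bullet> m + (norm (m - p))\<^sup>2 / 2 \<le> psi A y - c \<bullet> y + (norm (y - p))\<^sup>2 / 2"
  shows "c - (m - p) \<in> convex hull (proj A m)"
proof (rule subgrad_hull_rev[OF A])
  fix z
  define d where "d = z - m"
  define Q where "Q = psi A z - psi A m - c \<bullet> d + (m - p) \<bullet> d"
  define Nd where "Nd = (norm d)\<^sup>2"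
  have step: "Q + t * Nd / 2 \<ge> 0" if t: "0 < t" "t \<le> 1" for t
  proof -
    define y where "y = m + t *\<^sub>R d"
    have yc: "y = (1 - t) *\<^sub>R m + t *\<^sub>R z" unfolding y_def d_def by (simp add: algebra_simps)
    have cv: "psi A y \<le> (1 - t) * psi A m + t * psi A z" unfolding yc by (rule psi_convex[OF A]) (use t in auto)
    have cy: "c \<bullet> y = c \<bullet> m + t * (c \<bullet> d)" unfolding y_def by (simp add: inner_add_right)
    have ny: "(norm (y - p))\<^sup>2 = (norm (m - p))\<^sup>2 + 2 * (t * ((m - p) \<bullet> d)) + t\<^sup>2 * Nd"
    proof -
      have e: "y - p = (m - p) + t *\<^sub>R d" unfolding y_def by simp
      have "(norm (y - p))\<^sup>2 = (norm (m - p))\<^sup>2 + 2 * ((m - p) \<bullet> (t *\<^sub>R d)) + (norm (t *\<^sub>R d))\<^sup>2"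
        unfolding e by (rule nsq)
      then show ?thesis unfolding Nd_def by (simp add: power_mult_distrib)
    qed
    have "0 \<le> psi A y - c \<bullet> y + (norm (y - p))\<^sup>2 / 2 - (psi A m - c \<bullet> m + (norm (m - p))\<^sup>2 / 2)"
      using min[of y] by simp
    also have "\<dots> \<le> (1 - t) * psi A m + t * psi A z - psi A m - t * (c \<bullet> d) + t * ((m - p) \<bullet> d) + t\<^sup>2 * Nd / 2"
      using cv cy ny by linarith
    also have "\<dots> = t * (Q + t * Nd / 2)" unfolding Q_def by (simp add: power2_eq_square algebra_simps)
    finally have "0 \<le> t * (Q + t * Nd / 2)" .
    then show ?thesis using t by (simp add: zero_le_mult_iff)
  qed
  have "(\<lambda>k. Q + inverse (real (Suc k)) * Nd / 2) \<longlonglongrightarrow> Q + 0 * Nd / 2"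
    by (intro tendsto_intros LIMSEQ_inverse_real_of_nat) simp
  then have lim: "(\<lambda>k. Q + inverse (real (Suc k)) * Nd / 2) \<longlonglongrightarrow> Q" by simp
  have "0 \<le> Q"
  proof (rule LIMSEQ_le_const[OF lim])
    show "\<exists>N. \<forall>n\<ge>N. 0 \<le> Q + inverse (real (Suc n)) * Nd / 2"
      by (intro exI[of _ 0] allI impI step) (auto simp: field_simps)
  qed
  then show "psi A z - psi A m \<ge> (c - (m - p)) \<bullet> (z - m)"
    unfolding Q_def d_def by (simp add: inner_diff_left)
qed

lemma h_convex_step:
  assumes A: "closed A" "A \<noteq> {}" and th: "0 \<le> \<theta>" "\<theta> \<le> 1"
  shows "psi A (p + \<theta> *\<^sub>R (m - p)) - c \<bullet> (p + \<theta> *\<^sub>R (m - p)) + (norm (p + \<theta> *\<^sub>R (m - p) - p))\<^sup>2 / 2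
    \<le> (1 - \<theta>) * (psi A p - c \<bullet> p + (norm (p - p))\<^sup>2 / 2) + \<theta> * (psi A m - c \<bullet> m + (norm (m - p))\<^sup>2 / 2)"
proof -
  have zc: "p + \<theta> *\<^sub>R (m - p) = (1 - \<theta>) *\<^sub>R p + \<theta> *\<^sub>R m" by (simp add: algebra_simps)
  have cv: "psi A (p + \<theta> *\<^sub>R (m - p)) \<le> (1 - \<theta>) * psi A p + \<theta> * psi A m"
    unfolding zc by (rule psi_convex[OF A th])
  have ci: "c \<bullet> (p + \<theta> *\<^sub>R (m - p)) = (1 - \<theta>) * (c \<bullet> p) + \<theta> * (c \<bullet> m)"
    unfolding zc by (simp add: inner_add_right)
  have "(norm (p + \<theta> *\<^sub>R (m - p) - p))\<^sup>2 = \<theta>\<^sup>2 * (norm (m - p))\<^sup>2" by (simp add: power_mult_distrib)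
  also have "\<dots> \<le> \<theta> * (norm (m - p))\<^sup>2" using th by (intro mult_right_mono) (auto simp: power2_eq_square mult_le_one mult_left_le_one_le)
  finally have nq: "(norm (p + \<theta> *\<^sub>R (m - p) - p))\<^sup>2 \<le> \<theta> * (norm (m - p))\<^sup>2" .
  show ?thesis using cv ci nq by (simp add: algebra_simps)
qed



lemma graph_char:
  assumes "closed A" "A \<noteq> {}"
  shows "graph_of (clarke_subdiff (\<lambda>a. (infdist a A)\<^sup>2)) =
         {(x, w). \<exists>c \<in> convex hull (proj A x). w = 2 *\<^sub>R (x - c)}"
  unfolding graph_of_def clarke_char[OF assms] by auto

lemma liminf_sub_limsup: "PK_liminf A \<subseteq> PK_limsup A"
  unfolding PK_liminf_def PK_limsup_def
proof (intro subsetI, elim CollectE exE conjE, intro CollectI exI conjI)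
  fix x xs assume "\<forall>n. xs n \<in> A n" "xs \<longlonglongrightarrow> x"
  then show "strict_mono id" "\<forall>k. xs k \<in> A (id k)" "xs \<longlonglongrightarrow> x" by (auto simp: strict_mono_id)
qed

theorem mainTheorem5:
  fixes Xs :: "nat \<Rightarrow> (real^2) set" and X :: "(real^2) set"
  assumes "\<forall>n. closed (Xs n)"
    and "X \<noteq> {}"
    and "PK_converges Xs X"
  shows "graph_converges (\<lambda>n. clarke_subdiff (\<lambda>a. (infdist a (Xs n))\<^sup>2))
                         (clarke_subdiff (\<lambda>a. (infdist a X)\<^sup>2))"
proof -
  note cl = assms(1) and ne = assms(2) and pk = assms(3)
  have clX: "closed X" by (rule PK_closed[OF cl ne pk])
  have clXs: "closed (Xs n)" for n using cl by blast
  have neXs: "Xs n \<noteq> {}" for n by (rule PK_ne[OF ne pk])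
  define G where "G n = graph_of (clarke_subdiff (\<lambda>a. (infdist a (Xs n))\<^sup>2))" for n
  define H where "H = graph_of (clarke_subdiff (\<lambda>a. (infdist a X)\<^sup>2))"
  have G: "G n = {(x, w). \<exists>c \<in> convex hull (proj (Xs n) x). w = 2 *\<^sub>R (x - c)}" for n
    unfolding G_def by (rule graph_char[OF clXs neXs])
  have H: "H = {(x, w). \<exists>c \<in> convex hull (proj X x). w = 2 *\<^sub>R (x - c)}"
    unfolding H_def by (rule graph_char[OF clX ne])
  have sub1: "PK_limsup G \<subseteq> H"
  proof
    fix q assume "q \<in> PK_limsup G"
    then obtain r xs where r: "strict_mono r" and xsG: "\<And>k. xs k \<in> G (r k)" and xl: "xs \<longlonglongrightarrow> q"
      unfolding PK_limsup_def by blast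
    obtain p w where q: "q = (p, w)" by (cases q)
    define pk where "pk k = fst (xs k)" for k
    define wk where "wk k = snd (xs k)" for k
    have pl: "pk \<longlonglongrightarrow> p" unfolding pk_def using tendsto_fst[OF xl] q by simp
    have wl: "wk \<longlonglongrightarrow> w" unfolding wk_def using tendsto_snd[OF xl] q by simp
    define ck where "ck k = pk k - (1/2) *\<^sub>R wk k" for k
    have ckh: "ck k \<in> convex hull (proj (Xs (r k)) (pk k))" for k
    proof -
      have "xs k = (pk k, wk k)" unfolding pk_def wk_def by simp
      then obtain c where c: "c \<in> convex hull (proj (Xs (r k)) (pk k))" "wk k = 2 *\<^sub>R (pk k - c)"
        using xsG[of k] unfolding G by auto
      have "ck k = c" unfolding ck_def c(2) by (simp add: algebra_simps)
      then show ?thesis using c(1) by simp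
    qed
    define c where "c = p - (1/2) *\<^sub>R w"
    have cl_: "ck \<longlonglongrightarrow> c" unfolding ck_def c_def by (intro tendsto_intros pl wl)
    have sg: "psi X z - psi X p \<ge> c \<bullet> (z - p)" for z
    proof -
      have l1: "(\<lambda>k. psi (Xs (r k)) z - psi (Xs (r k)) (pk k)) \<longlonglongrightarrow> psi X z - psi X p"
        by (intro tendsto_intros PK_joint_psi[OF cl ne pk r] pl tendsto_const)
      have l2: "(\<lambda>k. ck k \<bullet> (z - pk k)) \<longlonglongrightarrow> c \<bullet> (z - p)" by (intro tendsto_intros cl_ pl)
      show ?thesis
        by (rule tendsto_le[OF trivial_limit_sequentially l1 l2])
           (intro always_eventually allI subgrad_hull ckh)
    qed
    have "c \<in> convex hull (proj X p)" by (rule subgrad_hull_rev[OF clX ne sg])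
    moreover have "w = 2 *\<^sub>R (p - c)" unfolding c_def by simp
    ultimately show "q \<in> H" unfolding H q by blast
  qed
  have sub2: "H \<subseteq> PK_liminf G"
  proof
    fix q assume "q \<in> H"
    then obtain p w c where q: "q = (p, w)" and c: "c \<in> convex hull (proj X p)" and w: "w = 2 *\<^sub>R (p - c)"
      unfolding H by blast
    have sg: "psi X z - psi X p \<ge> c \<bullet> (z - p)" for z by (rule subgrad_hull[OF c])
    define hh where "hh n y = psi (Xs n) y - c \<bullet> y + (norm (y - p))\<^sup>2 / 2" for n y
    define hX where "hX y = psi X y - c \<bullet> y + (norm (y - p))\<^sup>2 / 2" for y
    have exmin: "\<exists>m. \<forall>y. hh n m \<le> hh n y" for n
    proof -
      obtain a0 where a0: "a0 \<in> Xs n" using neXs by blast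
      show ?thesis
      proof (rule coercive_min[where p = p and B = "norm (a0 - c)" and C = "(norm a0)\<^sup>2 / 2 - p \<bullet> (a0 - c)"])
        show "continuous_on UNIV (hh n)" unfolding hh_def psi_def by (intro continuous_intros) auto
        fix y
        have "- ((y - p) \<bullet> (a0 - c)) \<le> norm (y - p) * norm (a0 - c)"
        proof -
          have "(p - y) \<bullet> (a0 - c) = - ((y - p) \<bullet> (a0 - c))" by (simp add: inner_diff_left)
          moreover have "norm (p - y) = norm (y - p)" by (rule norm_minus_commute)
          ultimately show ?thesis using norm_cauchy_schwarz[of "p - y" "a0 - c"] by simp
        qed
        moreover have "y \<bullet> a0 - c \<bullet> y = p \<bullet> (a0 - c) + (y - p) \<bullet> (a0 - c)"
          by (simp add: inner_diff_left inner_diff_right inner_commute)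
        moreover have "psi (Xs n) y \<ge> y \<bullet> a0 - (norm a0)\<^sup>2 / 2" by (rule psi_lower[OF a0])
        moreover have "norm (a0 - c) * norm (y - p) = norm (y - p) * norm (a0 - c)" by simp
        ultimately show "(norm (y - p))\<^sup>2 / 2 - norm (a0 - c) * norm (y - p) - ((norm a0)\<^sup>2 / 2 - p \<bullet> (a0 - c)) \<le> hh n y"
          unfolding hh_def by linarith
      qed
    qed
    define m where "m n = (SOME m. \<forall>y. hh n m \<le> hh n y)" for n
    have hm: "hh n (m n) \<le> hh n y" for n y unfolding m_def using someI_ex[OF exmin[of n]] by blast
    have opt: "c - (m n - p) \<in> convex hull (proj (Xs n) (m n))" for n
      by (rule opt_cond[OF clXs neXs]) (use hm in \<open>simp add: hh_def\<close>)
    have mG: "(m n, 2 *\<^sub>R (m n - (c - (m n - p)))) \<in> G n" for n unfolding G using opt by blast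
    have ml: "m \<longlonglongrightarrow> p" unfolding lim_sequentially
    proof (intro allI impI)
      fix e :: real assume e: "e > 0"
      show "\<exists>N. \<forall>n\<ge>N. dist (m n) p < e"
      proof (rule ccontr)
        assume "\<not> ?thesis"
        then have "\<forall>N. \<exists>n\<ge>N. n \<in> {n. dist (m n) p \<ge> e}" by (auto simp: not_less)
        then have "infinite {n. dist (m n) p \<ge> e}" unfolding infinite_nat_iff_unbounded_le .
        then obtain r :: "nat \<Rightarrow> nat" where r: "strict_mono r" "\<And>k. dist (m (r k)) p \<ge> e"
          using infinite_enumerate by blast
        define th where "th k = e / dist (m (r k)) p" for k
        have th: "0 \<le> th k" "th k \<le> 1" for k unfolding th_def using r(2)[of k] e by (auto simp: divide_le_eq_1)
        define zz where "zz k = p + th k *\<^sub>R (m (r k) - p)" for k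
        have zs: "zz k \<in> sphere p e" for k
        proof -
          have "dist p (zz k) = th k * norm (m (r k) - p)" unfolding zz_def using th[of k] by (simp add: dist_norm)
          also have "\<dots> = e" unfolding th_def using r(2)[of k] e by (auto simp: dist_norm)
          finally show ?thesis by simp
        qed
        have hz: "hh (r k) (zz k) \<le> hh (r k) p" for k
        proof -
          have "hh (r k) (zz k) \<le> (1 - th k) * hh (r k) p + th k * hh (r k) (m (r k))"
            unfolding hh_def zz_def by (rule h_convex_step[OF clXs neXs th])
          also have "\<dots> \<le> (1 - th k) * hh (r k) p + th k * hh (r k) p"
            using hm[of "r k" p] th[of k] by (intro add_left_mono mult_left_mono) auto
          also have "\<dots> = hh (r k) p" by (simp add: algebra_simps)
          finally show ?thesis .
        qed
        obtain l s where ls: "l \<in> sphere p e" "strict_mono s" "(zz \<circ> s) \<longlonglongrightarrow> l"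
          by (rule seq_compactE[OF compact_imp_seq_compact[OF compact_sphere], of zz]) (use zs in blast)+
        have rs: "strict_mono (r \<circ> s)" by (rule strict_mono_o[OF r(1) ls(2)])
        have l1: "(\<lambda>k. hh ((r \<circ> s) k) ((zz \<circ> s) k)) \<longlonglongrightarrow> hX l"
          unfolding hh_def hX_def by (intro tendsto_intros PK_joint_psi[OF cl ne pk rs ls(3)] ls(3)) simp
        have l2: "(\<lambda>k. hh ((r \<circ> s) k) p) \<longlonglongrightarrow> hX p"
          unfolding hh_def hX_def by (intro tendsto_intros PK_joint_psi[OF cl ne pk rs tendsto_const]) simp
        have "hX l \<le> hX p"
          by (rule tendsto_le[OF trivial_limit_sequentially l2 l1]) (simp add: hz)
        moreover have "hX l - hX p \<ge> e\<^sup>2 / 2"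
        proof -
          have "norm (l - p) = e" using ls(1) by (simp add: dist_norm norm_minus_commute)
          then show ?thesis using sg[of l] unfolding hX_def by (simp add: inner_diff_right)
        qed
        moreover have "e\<^sup>2 > 0" using e by simp
        ultimately show False by linarith
      qed
    qed
    have "(\<lambda>n. (m n, 2 *\<^sub>R (m n - (c - (m n - p))))) \<longlonglongrightarrow> (p, 2 *\<^sub>R (p - (c - (p - p))))"
      by (intro tendsto_intros ml)
    then have "(\<lambda>n. (m n, 2 *\<^sub>R (m n - (c - (m n - p))))) \<longlonglongrightarrow> q" unfolding q w by simp
    then show "q \<in> PK_liminf G" unfolding PK_liminf_def
      by (intro CollectI exI[of _ "\<lambda>n. (m n, 2 *\<^sub>R (m n - (c - (m n - p))))"] conjI allI mG)
  qed
  have "PK_liminf G = H" "PK_limsup G = H"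
    using sub1 sub2 liminf_sub_limsup[of G] by auto
  then show ?thesis
    unfolding graph_converges_def PK_converges_def G_def H_def by simp
qed

end
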